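(* Let $\overline{u}$ be the optimal control and $\overline{p}$ the optimal adjoint state of the continuous problem described in the context, and let $\tilde u_h$ be the modified interpolant of $\overline{u}$ defined in the context. Then for sufficiently small $h>0$, $$(\overline{p}+\beta\overline{u},\,u-\tilde u_h)_{L^2(\Omega)}\ge 0\qquad\forall u\in U_{ad}.$$
   Context: $\Omega\subset\mathbb{R}^2$ is a bounded convex polygonal domain, $\beta>0$, $y_d\in L^2(\Omega)$, $u_a<u_b$ are real constants, $U_{ad}:=\{v\in L^2(\Omega):u_a\le v\le u_b\text{ a.e.}\}$. The optimal control problem is: minimize $\frac12\|y-y_d\|^2_{L^2(\Omega)}+\frac\beta2\|u\|^2_{L^2(\Omega)}$ over $(y,u)\in H^1_0(\Omega)\times U_{ad}$ subject to $-\Delta y=u$ in $\Omega$, $y=0$ on $\partial\Omega$. Its unique solution $(\overline{y},\overline{u})$ together with the adjoint state $\overline{p}\in H^1_0(\Omega)$ (weak solution of $-\Delta\overline{p}=\overline{y}-y_d$, $\overline{p}=0$ on $\partial\Omega$) satisfies $(\overline{p}+\beta\overline{u},u-\overline{u})_{L^2(\Omega)}\ge0$ for all $u\in U_{ad}$. The optimal control satisfies $\overline{u}\in W^{1,\infty}(\Omega)$ (in particular it is continuous on $\overline\Omega$). $\mathcal{T}_h$ is a shape-regular simplicial triangulation of $\Omega$ with mesh size $h$, $U_{ad,h}^1:=\{v\in U_{ad}: v|_T\in\mathbb{P}_1(T)\ \forall T\}$, and $\Pi_h^1:U_{ad}\to U^1_{ad,h}$ is the standard elementwise linear (nodal) interpolation.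 It is assumed (for $h$ small enough) that no $T\in\mathcal{T}_h$ satisfies both $\min_{\overline T}\overline{u}=u_a$ and $\max_{\overline T}\overline{u}=u_b$. Then $\tilde u_h\in U_{ad,h}^1$ is defined elementwise by $\tilde u_h|_T=u_a$ if $\min_{\overline T}\overline{u}=u_a$, $\tilde u_h|_T=u_b$ if $\max_{\overline T}\overline{u}=u_b$, and $\tilde u_h|_T=\Pi_h^1(\overline{u})|_T$ otherwise. *)

theory Defs
  imports "HOL-Analysis.Analysis"
begin

type_synonym pt = "real^2"

definition L2 :: "pt set \<Rightarrow> (pt \<Rightarrow> real) \<Rightarrow> bool" where
  "L2 \<Omega> f \<longleftrightarrow> f \<in> borel_measurable (lebesgue_on \<Omega>) \<and>
      integrable (lebesgue_on \<Omega>) (\<lambda>x. (f x)\<^sup>2)"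

definition l2inner :: "pt set \<Rightarrow> (pt \<Rightarrow> real) \<Rightarrow> (pt \<Rightarrow> real) \<Rightarrow> real" where
  "l2inner \<Omega> f g = (\<integral>x. f x * g x \<partial>lebesgue_on \<Omega>)"

definition l2normsq :: "pt set \<Rightarrow> (pt \<Rightarrow> real) \<Rightarrow> real" where
  "l2normsq \<Omega> f = (\<integral>x. (f x)\<^sup>2 \<partial>lebesgue_on \<Omega>)"

definition pderiv_cl :: "2 \<Rightarrow> (pt \<Rightarrow> real) \<Rightarrow> pt \<Rightarrow> real" where
  "pderiv_cl i f x = frechet_derivative f (at x) (axis i 1)"

fun Ck :: "nat \<Rightarrow> (pt \<Rightarrow> real) \<Rightarrow> bool" where
  "Ck 0 f = continuous_on UNIV f"
| "Ck (Suc k) f = (continuous_on UNIV f \<and> f differentiable_on UNIV \<and>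
       (\<forall>i. Ck k (pderiv_cl i f)))"

definition smooth :: "(pt \<Rightarrow> real) \<Rightarrow> bool" where
  "smooth f \<longleftrightarrow> (\<forall>k. Ck k f)"

definition test_fun :: "pt set \<Rightarrow> (pt \<Rightarrow> real) \<Rightarrow> bool" where
  "test_fun \<Omega> \<phi> \<longleftrightarrow> smooth \<phi> \<and> compact (closure {x. \<phi> x \<noteq> 0})
      \<and> closure {x. \<phi> x \<noteq> 0} \<subseteq> \<Omega>"

definition weak_deriv :: "pt set \<Rightarrow> 2 \<Rightarrow> (pt \<Rightarrow> real) \<Rightarrow> (pt \<Rightarrow> real) \<Rightarrow> bool" where
  "weak_deriv \<Omega> i f g \<longleftrightarrow> L2 \<Omega> f \<and> L2 \<Omega> g \<and>
     (\<forall>\<phi>. test_fun \<Omega> \<phi> \<longrightarrow> l2inner \<Omega> f (pderiv_cl i \<phi>) = - l2inner \<Omega> g \<phi>)"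

definition wgrad :: "pt set \<Rightarrow> 2 \<Rightarrow> (pt \<Rightarrow> real) \<Rightarrow> pt \<Rightarrow> real" where
  "wgrad \<Omega> i f = (SOME g. weak_deriv \<Omega> i f g)"

definition H1 :: "pt set \<Rightarrow> (pt \<Rightarrow> real) \<Rightarrow> bool" where
  "H1 \<Omega> f \<longleftrightarrow> L2 \<Omega> f \<and> (\<forall>i. \<exists>g. weak_deriv \<Omega> i f g)"

text \<open>H1_0 = closure of the test functions in the H1 norm.\<close>
definition H10 :: "pt set \<Rightarrow> (pt \<Rightarrow> real) \<Rightarrow> bool" where
  "H10 \<Omega> f \<longleftrightarrow> H1 \<Omega> f \<and>
     (\<exists>\<phi>s :: nat \<Rightarrow> pt \<Rightarrow> real. (\<forall>n. test_fun \<Omega> (\<phi>s n)) \<and>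
        (\<lambda>n. l2normsq \<Omega> (\<lambda>x. \<phi>s n x - f x)) \<longlonglongrightarrow> 0 \<and>
        (\<forall>i. (\<lambda>n. l2normsq \<Omega> (\<lambda>x. pderiv_cl i (\<phi>s n) x - wgrad \<Omega> i f x)) \<longlonglongrightarrow> 0))"

text \<open>y is the weak solution of  -Laplace y = g in Omega, y = 0 on the boundary.\<close>
definition weak_poisson :: "pt set \<Rightarrow> (pt \<Rightarrow> real) \<Rightarrow> (pt \<Rightarrow> real) \<Rightarrow> bool" where
  "weak_poisson \<Omega> g y \<longleftrightarrow> H10 \<Omega> y \<and>
     (\<forall>v. H10 \<Omega> v \<longrightarrow>
        (\<Sum>i\<in>UNIV. l2inner \<Omega> (wgrad \<Omega> i y) (wgrad \<Omega> i v)) = l2inner \<Omega> g v)"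

definition Uad :: "pt set \<Rightarrow> real \<Rightarrow> real \<Rightarrow> (pt \<Rightarrow> real) set" where
  "Uad \<Omega> ua ub = {v. L2 \<Omega> v \<and> (AE x in lebesgue_on \<Omega>. ua \<le> v x \<and> v x \<le> ub)}"

definition cost :: "pt set \<Rightarrow> (pt \<Rightarrow> real) \<Rightarrow> real \<Rightarrow> (pt \<Rightarrow> real) \<Rightarrow> (pt \<Rightarrow> real) \<Rightarrow> real" where
  "cost \<Omega> yd \<beta> y u = l2normsq \<Omega> (\<lambda>x. y x - yd x) / 2 + \<beta> / 2 * l2normsq \<Omega> u"

definition optimal_pair ::
  "pt set \<Rightarrow> (pt \<Rightarrow> real) \<Rightarrow> real \<Rightarrow> real \<Rightarrow> real \<Rightarrow> (pt \<Rightarrow> real) \<Rightarrow> (pt \<Rightarrow> real) \<Rightarrow> bool" where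
  "optimal_pair \<Omega> yd \<beta> ua ub yb ub' \<longleftrightarrow>
     ub' \<in> Uad \<Omega> ua ub \<and> weak_poisson \<Omega> ub' yb \<and>
     (\<forall>y u. u \<in> Uad \<Omega> ua ub \<longrightarrow> weak_poisson \<Omega> u y \<longrightarrow>
        cost \<Omega> yd \<beta> yb ub' \<le> cost \<Omega> yd \<beta> y u)"

definition convex_polygonal_domain :: "pt set \<Rightarrow> bool" where
  "convex_polygonal_domain \<Omega> \<longleftrightarrow> open \<Omega> \<and> \<Omega> \<noteq> {} \<and> bounded \<Omega> \<and> convex \<Omega> \<and>
     (\<exists>P. finite P \<and> \<Omega> = interior (convex hull P))"

text \<open>A simplicial triangulation is given by the vertex sets of its (closed) triangles.\<close>
definition triangulation :: "pt set \<Rightarrow> pt set set \<Rightarrow> bool" where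
  "triangulation \<Omega> \<T> \<longleftrightarrow> finite \<T> \<and>
     (\<forall>V\<in>\<T>. card V = 3 \<and> \<not> affine_dependent V) \<and>
     \<Union>((\<lambda>V. convex hull V) ` \<T>) = closure \<Omega> \<and>
     (\<forall>V\<in>\<T>. \<forall>W\<in>\<T>. convex hull V \<inter> convex hull W = convex hull (V \<inter> W))"

definition meshsize :: "pt set set \<Rightarrow> real" where
  "meshsize \<T> = Max ((\<lambda>V. diameter (convex hull V)) ` \<T>)"

definition inradius :: "pt set \<Rightarrow> real" where
  "inradius T = Sup {r. \<exists>c. ball c r \<subseteq> T}"

definition shape_regular_family :: "(real \<Rightarrow> pt set set) \<Rightarrow> bool" where
  "shape_regular_family Tr \<longleftrightarrow> (\<exists>\<sigma>>0. \<forall>h>0. \<forall>V\<in>Tr h.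
      diameter (convex hull V) \<le> \<sigma> * inradius (convex hull V))"

definition P1interp :: "pt set \<Rightarrow> (pt \<Rightarrow> real) \<Rightarrow> pt \<Rightarrow> real" where
  "P1interp V f = (THE l. (\<exists>a b. \<forall>z. l z = a \<bullet> z + b) \<and> (\<forall>v\<in>V. l v = f v))"

end

theory Submission
  imports Defs
begin

lemma L2_integrable:
  assumes "L2 \<Omega> f" "bounded \<Omega>" "open \<Omega>"
  shows "integrable (lebesgue_on \<Omega>) f"
proof -
  interpret finite_measure "lebesgue_on \<Omega>"
    using assms by (intro finite_measure_lebesgue_on lmeasurable_open)
  have m: "f \<in> borel_measurable (lebesgue_on \<Omega>)" and i: "integrable (lebesgue_on \<Omega>) (\<lambda>x. (f x)\<^sup>2)"
    using assms(1) unfolding L2_def by auto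
  have "integrable (lebesgue_on \<Omega>) (\<lambda>x. 1 + (f x)\<^sup>2)" using i by simp
  then show ?thesis
  proof (rule Bochner_Integration.integrable_bound[OF _ m], intro AE_I2)
    fix x
    have "0 \<le> (\<bar>f x\<bar> - 1)\<^sup>2" by simp
    also have "\<dots> = (f x)\<^sup>2 - 2 * \<bar>f x\<bar> + 1" by (simp add: power2_diff)
    finally have "\<bar>f x\<bar> \<le> 1 + (f x)\<^sup>2" by simp
    then show "norm (f x) \<le> norm (1 + (f x)\<^sup>2)" by simp
  qed
qed

lemma open_bound:
  fixes f :: "pt \<Rightarrow> real"
  assumes "open \<Omega>" "continuous_on \<Omega> f" "AE x in lebesgue_on \<Omega>. a \<le> f x"
  shows "\<forall>x\<in>\<Omega>. a \<le> f x"
proof (rule ccontr)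
  let ?S = "\<Omega> \<inter> f -` {..<a}"
  assume "\<not> ?thesis"
  then have ne: "?S \<noteq> {}" by auto
  have op: "open ?S" using continuous_open_preimage[OF assms(2) assms(1)] by auto
  have "AE x in lebesgue. x \<in> \<Omega> \<longrightarrow> a \<le> f x"
    using assms(3) AE_restrict_space_iff[of \<Omega> lebesgue] assms(1) by auto
  then obtain N where N2: "{x \<in> space lebesgue. \<not> (x \<in> \<Omega> \<longrightarrow> a \<le> f x)} \<subseteq> N"
    and N3: "emeasure lebesgue N = 0" "N \<in> sets lebesgue"
    by (erule AE_E)
  have N1: "N \<in> null_sets lebesgue" using N3 by (simp add: null_sets_def)
  note N = N1 N2
  have "?S \<subseteq> N" using N(2) by auto
  then have "negligible ?S" using N(1) negligible_subset negligible_iff_null_sets by metis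
  then show False using open_not_negligible[OF op ne] by simp
qed

lemma inf_eq_at:
  fixes f :: "pt \<Rightarrow> real"
  assumes "x \<in> K" "\<forall>z\<in>K. a \<le> f z" "f x = a"
  shows "(INF z\<in>K. f z) = a"
  by (rule cInf_eq_minimum) (use assms in auto)

lemma sup_eq_at:
  fixes f :: "pt \<Rightarrow> real"
  assumes "x \<in> K" "\<forall>z\<in>K. f z \<le> a" "f x = a"
  shows "(SUP z\<in>K. f z) = a"
  by (rule cSup_eq_maximum) (use assms in auto)

lemma vi_null:
  fixes g d :: "'a \<Rightarrow> real"
  assumes g: "integrable M g" and d: "d \<in> borel_measurable M"
    and C: "\<forall>x\<in>space M. \<bar>d x\<bar> \<le> C"
    and np: "\<forall>x\<in>space M. g x * d x \<le> 0"
    and I: "0 \<le> (\<integral>x. g x * d x \<partial>M)"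
  shows "AE x in M. g x * d x = 0"
proof -
  have gm: "g \<in> borel_measurable M" using g by auto
  have int: "integrable M (\<lambda>x. - (g x * d x))"
  proof (rule Bochner_Integration.integrable_bound[where f="\<lambda>x. g x * C"])
    show "integrable M (\<lambda>x. g x * C)" using g by simp
    show "(\<lambda>x. - (g x * d x)) \<in> borel_measurable M" using gm d by measurable
    show "AE x in M. norm (- (g x * d x)) \<le> norm (g x * C)"
    proof (rule AE_I2)
      fix x assume "x \<in> space M"
      then have "\<bar>d x\<bar> \<le> C" using C by auto
      then have "\<bar>g x\<bar> * \<bar>d x\<bar> \<le> \<bar>g x\<bar> * \<bar>C\<bar>"
        by (intro mult_left_mono) auto
      then show "norm (- (g x * d x)) \<le> norm (g x * C)" by (simp add: abs_mult)
    qed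
  qed
  have nn: "AE x in M. 0 \<le> - (g x * d x)" using np by (intro AE_I2) auto
  have "(\<integral>x. - (g x * d x) \<partial>M) = - (\<integral>x. g x * d x \<partial>M)" by simp
  moreover have "0 \<le> (\<integral>x. - (g x * d x) \<partial>M)" using nn by (rule integral_nonneg_AE)
  ultimately have "(\<integral>x. - (g x * d x) \<partial>M) = 0" using I by linarith
  then have "AE x in M. - (g x * d x) = 0" using integral_nonneg_eq_0_iff_AE[OF int nn] by simp
  then show ?thesis by simp
qed

theorem lemma3p5:
  fixes \<Omega> :: "pt set" and \<beta> ua ub :: real
    and yd yb ubar pbar :: "pt \<Rightarrow> real"
    and Tr :: "real \<Rightarrow> pt set set"
    and ut :: "real \<Rightarrow> pt \<Rightarrow> real"
  assumes dom: "convex_polygonal_domain \<Omega>"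
    and beta: "\<beta> > 0"
    and yd: "L2 \<Omega> yd"
    and bounds: "ua < ub"
    and opt: "optimal_pair \<Omega> yd \<beta> ua ub yb ubar"
    and adj: "weak_poisson \<Omega> (\<lambda>x. yb x - yd x) pbar"
    and VI: "\<forall>u\<in>Uad \<Omega> ua ub. l2inner \<Omega> (\<lambda>x. pbar x + \<beta> * ubar x) (\<lambda>x. u x - ubar x) \<ge> 0"
    and ucont: "continuous_on (closure \<Omega>) ubar"
    and tri: "\<forall>h>0. triangulation \<Omega> (Tr h) \<and> meshsize (Tr h) \<le> h"
    and shape: "shape_regular_family Tr"
    and noboth: "\<exists>h0>0. \<forall>h. 0 < h \<and> h < h0 \<longrightarrow>
        \<not> (\<exists>V\<in>Tr h. (INF x\<in>convex hull V. ubar x) = ua \<and> (SUP x\<in>convex hull V. ubar x) = ub)"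
    and ut: "\<forall>h>0. \<forall>V\<in>Tr h. \<forall>x\<in>interior (convex hull V).
        ut h x = (if (INF z\<in>convex hull V. ubar z) = ua then ua
                  else if (SUP z\<in>convex hull V. ubar z) = ub then ub
                  else P1interp V ubar x)"
  shows "\<exists>h1>0. \<forall>h. 0 < h \<and> h < h1 \<longrightarrow>
           (\<forall>u\<in>Uad \<Omega> ua ub.
              l2inner \<Omega> (\<lambda>x. pbar x + \<beta> * ubar x) (\<lambda>x. u x - ut h x) \<ge> 0)"
proof -
  let ?M = "lebesgue_on \<Omega>"
  define g where "g = (\<lambda>x. pbar x + \<beta> * ubar x)"
  have opn: "open \<Omega>" and bnd: "bounded \<Omega>"
    using dom unfolding convex_polygonal_domain_def by auto
  have Osets: "\<Omega> \<in> sets lebesgue" using opn by auto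
  have spc: "space ?M = \<Omega>" by simp
  interpret fm: finite_measure ?M
    using bnd opn by (intro finite_measure_lebesgue_on lmeasurable_open)
  have ubUad: "ubar \<in> Uad \<Omega> ua ub" using opt unfolding optimal_pair_def by auto
  have ubL2: "L2 \<Omega> ubar" and ubAE: "AE x in ?M. ua \<le> ubar x \<and> ubar x \<le> ub"
    using ubUad unfolding Uad_def by auto
  have pL2: "L2 \<Omega> pbar"
    using adj unfolding weak_poisson_def H10_def H1_def by auto
  have ubm[measurable]: "ubar \<in> borel_measurable ?M" using ubL2 unfolding L2_def by auto
  have pm[measurable]: "pbar \<in> borel_measurable ?M" using pL2 unfolding L2_def by auto
  have gm[measurable]: "g \<in> borel_measurable ?M" unfolding g_def by measurable
  have gint: "integrable ?M g"
    unfolding g_def using L2_integrable[OF ubL2 bnd opn] L2_integrable[OF pL2 bnd opn] by auto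
  have ucO: "continuous_on \<Omega> ubar"
    using ucont closure_subset continuous_on_subset by blast
  have lo: "\<forall>x\<in>\<Omega>. ua \<le> ubar x"
    by (rule open_bound[OF opn ucO]) (use ubAE in \<open>eventually_elim, auto\<close>)
  have hi': "\<forall>x\<in>\<Omega>. - ub \<le> - ubar x"
    by (rule open_bound[OF opn continuous_on_minus[OF ucO]]) (use ubAE in \<open>eventually_elim, auto\<close>)
  have loC: "ua \<le> ubar x" if "x \<in> closure \<Omega>" for x
    using continuous_ge_on_closure[OF ucont that] lo by auto
  have hiC: "ubar x \<le> ub" if "x \<in> closure \<Omega>" for x
    using continuous_le_on_closure[OF ucont that] hi' by auto
  have neg: "AE x in ?M. g x < 0 \<longrightarrow> ubar x = ub"
  proof -
    define v where "v = (\<lambda>x. if g x < 0 \<and> ubar x < ub then ub else ubar x)"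
    have vm[measurable]: "v \<in> borel_measurable ?M" unfolding v_def by measurable
    have vb: "ua \<le> v x \<and> v x \<le> ub" if "x \<in> \<Omega>" for x
      using lo hiC closure_subset that bounds unfolding v_def by fastforce
    have "v \<in> Uad \<Omega> ua ub"
      unfolding Uad_def L2_def
    proof (intro CollectI conjI vm)
      show "integrable ?M (\<lambda>x. (v x)\<^sup>2)"
      proof (rule Bochner_Integration.integrable_bound[where f="\<lambda>x. (ubar x)\<^sup>2 + ub\<^sup>2"])
        show "integrable ?M (\<lambda>x. (ubar x)\<^sup>2 + ub\<^sup>2)"
          using ubL2 unfolding L2_def by auto
        show "(\<lambda>x. (v x)\<^sup>2) \<in> borel_measurable ?M" by measurable
        show "AE x in ?M. norm ((v x)\<^sup>2) \<le> norm ((ubar x)\<^sup>2 + ub\<^sup>2)"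
          by (rule AE_I2) (auto simp: v_def)
      qed
      show "AE x in ?M. ua \<le> v x \<and> v x \<le> ub" using vb by (intro AE_I2) auto
    qed
    then have I: "0 \<le> (\<integral>x. g x * (v x - ubar x) \<partial>?M)"
      using VI unfolding l2inner_def g_def by auto
    have "AE x in ?M. g x * (v x - ubar x) = 0"
    proof (rule vi_null[OF gint _ _ _ I, where C="ub - ua"])
      show "(\<lambda>x. v x - ubar x) \<in> borel_measurable ?M" by measurable
      show "\<forall>x\<in>space ?M. \<bar>v x - ubar x\<bar> \<le> ub - ua"
        using vb lo hiC closure_subset by fastforce
      show "\<forall>x\<in>space ?M. g x * (v x - ubar x) \<le> 0"
        by (auto simp: v_def mult_nonpos_nonneg less_imp_le)
    qed
    then show ?thesis
    proof (rule AE_mp, intro AE_I2 impI)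
      fix x assume x: "x \<in> space ?M" and z: "g x * (v x - ubar x) = 0" and gn: "g x < 0"
      have "ubar x \<le> ub" using hiC x closure_subset by auto
      moreover have "\<not> ubar x < ub"
      proof
        assume "ubar x < ub"
        then have "g x * (v x - ubar x) < 0" using gn by (simp add: v_def mult_neg_pos)
        then show False using z by simp
      qed
      ultimately show "ubar x = ub" by simp
    qed
  qed
  have pos: "AE x in ?M. g x > 0 \<longrightarrow> ubar x = ua"
  proof -
    define v where "v = (\<lambda>x. if g x > 0 \<and> ubar x > ua then ua else ubar x)"
    have vm[measurable]: "v \<in> borel_measurable ?M" unfolding v_def by measurable
    have vb: "ua \<le> v x \<and> v x \<le> ub" if "x \<in> \<Omega>" for x
      using lo hiC closure_subset that bounds unfolding v_def by fastforce
    have "v \<in> Uad \<Omega> ua ub"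
      unfolding Uad_def L2_def
    proof (intro CollectI conjI vm)
      show "integrable ?M (\<lambda>x. (v x)\<^sup>2)"
      proof (rule Bochner_Integration.integrable_bound[where f="\<lambda>x. (ubar x)\<^sup>2 + ua\<^sup>2"])
        show "integrable ?M (\<lambda>x. (ubar x)\<^sup>2 + ua\<^sup>2)"
          using ubL2 unfolding L2_def by auto
        show "(\<lambda>x. (v x)\<^sup>2) \<in> borel_measurable ?M" by measurable
        show "AE x in ?M. norm ((v x)\<^sup>2) \<le> norm ((ubar x)\<^sup>2 + ua\<^sup>2)"
          by (rule AE_I2) (auto simp: v_def)
      qed
      show "AE x in ?M. ua \<le> v x \<and> v x \<le> ub" using vb by (intro AE_I2) auto
    qed
    then have I: "0 \<le> (\<integral>x. g x * (v x - ubar x) \<partial>?M)"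
      using VI unfolding l2inner_def g_def by auto
    have "AE x in ?M. g x * (v x - ubar x) = 0"
    proof (rule vi_null[OF gint _ _ _ I, where C="ub - ua"])
      show "(\<lambda>x. v x - ubar x) \<in> borel_measurable ?M" by measurable
      show "\<forall>x\<in>space ?M. \<bar>v x - ubar x\<bar> \<le> ub - ua"
        using vb lo hiC closure_subset by fastforce
      show "\<forall>x\<in>space ?M. g x * (v x - ubar x) \<le> 0"
        by (auto simp: v_def mult_nonneg_nonpos less_imp_le)
    qed
    then show ?thesis
    proof (rule AE_mp, intro AE_I2 impI)
      fix x assume x: "x \<in> space ?M" and z: "g x * (v x - ubar x) = 0" and gp: "g x > 0"
      have "ua \<le> ubar x" using lo x by auto
      moreover have "\<not> ubar x > ua"
      proof
        assume "ubar x > ua"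
        then have "g x * (v x - ubar x) < 0" using gp by (simp add: v_def mult_pos_neg)
        then show False using z by simp
      qed
      ultimately show "ubar x = ua" by simp
    qed
  qed
  obtain h0 where h0: "h0 > 0" and nb: "\<forall>h. 0 < h \<and> h < h0 \<longrightarrow>
        \<not> (\<exists>V\<in>Tr h. (INF x\<in>convex hull V. ubar x) = ua \<and> (SUP x\<in>convex hull V. ubar x) = ub)"
    using noboth by blast
  show ?thesis
  proof (intro exI[of _ h0] conjI h0 allI impI ballI)
    fix h u assume hh: "0 < h \<and> h < h0" and u: "u \<in> Uad \<Omega> ua ub"
    have uAE: "AE x in ?M. ua \<le> u x \<and> u x \<le> ub" using u unfolding Uad_def by auto
    have triT: "triangulation \<Omega> (Tr h)" using tri hh by auto
    then have finT: "finite (Tr h)" and cardT: "\<forall>V\<in>Tr h. card V = 3"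
      and covT: "\<Union>((\<lambda>V. convex hull V) ` Tr h) = closure \<Omega>"
      unfolding triangulation_def by auto
    have finV: "finite V" if "V \<in> Tr h" for V
      using cardT that by (metis card.infinite zero_neq_numeral)
    define F where "F = (\<Union>V\<in>Tr h. frontier (convex hull V))"
    have "negligible F" unfolding F_def
      using finT by (auto intro!: negligible_Union negligible_convex_frontier convex_convex_hull)
    then have "F \<in> null_sets lebesgue" by (simp add: negligible_iff_null_sets)
    then have "AE x in lebesgue. x \<notin> F" by (rule AE_not_in)
    then have "AE x in lebesgue. x \<in> \<Omega> \<longrightarrow> x \<notin> F" by eventually_elim auto
    then have AEF: "AE x in ?M. x \<notin> F" using AE_restrict_space_iff[of \<Omega> lebesgue] Osets by simp
    have AEsp: "AE x in ?M. x \<in> \<Omega>" using AE_space[of ?M] by simp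
    have "AE x in ?M. 0 \<le> g x * (u x - ut h x)"
      using AEF AEsp uAE neg pos
    proof eventually_elim
      case (elim x)
      then have xO: "x \<in> \<Omega>" and xF: "x \<notin> F" by auto
      then have "x \<in> closure \<Omega>" using closure_subset by auto
      then obtain V where V: "V \<in> Tr h" and xV: "x \<in> convex hull V" using covT by auto
      have cl: "closed (convex hull V)"
        using finV[OF V] by (simp add: compact_imp_closed finite_imp_compact_convex_hull)
      have xi: "x \<in> interior (convex hull V)"
        using xF V xV cl unfolding F_def frontier_def by (auto simp: closure_closed)
      have sub: "convex hull V \<subseteq> closure \<Omega>" using covT V by auto
      have utx: "ut h x = (if (INF z\<in>convex hull V. ubar z) = ua then ua
                  else if (SUP z\<in>convex hull V. ubar z) = ub then ub
                  else P1interp V ubar x)"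
        using ut hh V xi by auto
      show ?case
      proof (cases "g x < 0")
        case True
        then have "ubar x = ub" using elim by auto
        then have S: "(SUP z\<in>convex hull V. ubar z) = ub"
          by (intro sup_eq_at[OF xV]) (use sub hiC in auto)
        then have "(INF z\<in>convex hull V. ubar z) \<noteq> ua" using nb hh V by blast
        then have "ut h x = ub" using utx S by simp
        then show ?thesis using True elim by (simp add: mult_nonpos_nonpos)
      next
        case False
        show ?thesis
        proof (cases "g x > 0")
          case True
          then have "ubar x = ua" using elim by auto
          then have "(INF z\<in>convex hull V. ubar z) = ua"
            by (intro inf_eq_at[OF xV]) (use sub loC in auto)
          then have "ut h x = ua" using utx by simp
          then show ?thesis using True elim by simp
        next
          case False
          then have "g x = 0" using \<open>\<not> g x < 0\<close> by simp
          then show ?thesis by simp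
        qed
      qed
    qed
    then show "0 \<le> l2inner \<Omega> (\<lambda>x. pbar x + \<beta> * ubar x) (\<lambda>x. u x - ut h x)"
      unfolding l2inner_def g_def by (rule integral_nonneg_AE)
  qed
qed

end
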